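(* Let $\lambda_k\coloneqq-1/k+ik$ for $k\in\mathbb{N}$, and let $A$ be the diagonal operator on $\ell^2$ given by $A(\zeta_k)_{k\in\mathbb{N}}=(\lambda_k\zeta_k)_{k\in\mathbb{N}}$ with domain $D(A)=\{(\zeta_k)\in\ell^2:(\lambda_k\zeta_k)\in\ell^2\}$. Then $A$ generates a polynomially stable $C_0$-semigroup with parameter $\beta=1$, and for every $\alpha>0$, \[ \liminf_{t\to\infty}t^{\alpha/3}\big\|e^{A^{-1}t}(-A)^{-\alpha}\big\|\ge\frac{1}{2^{\alpha/2}}\Big(\frac{\alpha}{3e}\Big)^{\alpha/3}. \]
   Context: A $C_0$-semigroup $(e^{At})_{t\ge0}$ on a Hilbert space is called polynomially stable with parameter $\beta>0$ if it is bounded and there exist $M,t_0>0$ with $\|e^{At}(I-A)^{-1}\|\le M t^{-1/\beta}$ for all $t\ge t_0$. For this diagonal operator, $e^{A^{-1}t}(-A)^{-\alpha}$ is the diagonal operator with entries $e^{t/\lambda_k}(-\lambda_k)^{-\alpha}$ (principal branch). *)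

theory Defs
  imports "HOL-Analysis.Analysis"
begin

text \<open>The Hilbert space l2 = l2(N), modelled as square-summable complex sequences
  indexed by nat (index k :: nat corresponds to the paper's index k+1 in N = {1,2,...}).\<close>

definition l2 :: "(nat \<Rightarrow> complex) set" where
  "l2 = {x. summable (\<lambda>k. (cmod (x k))\<^sup>2)}"

definition l2norm :: "(nat \<Rightarrow> complex) \<Rightarrow> real" where
  "l2norm x = sqrt (\<Sum>k. (cmod (x k))\<^sup>2)"

definition opnorm :: "((nat \<Rightarrow> complex) \<Rightarrow> (nat \<Rightarrow> complex)) \<Rightarrow> real" where
  "opnorm T = (SUP x\<in>{x\<in>l2. l2norm x \<le> 1}. l2norm (T x))"

definition bounded_op :: "((nat \<Rightarrow> complex) \<Rightarrow> (nat \<Rightarrow> complex)) \<Rightarrow> bool" where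
  "bounded_op T \<longleftrightarrow>
     (\<forall>x\<in>l2. T x \<in> l2) \<and>
     (\<forall>x\<in>l2. \<forall>y\<in>l2. T (\<lambda>k. x k + y k) = (\<lambda>k. T x k + T y k)) \<and>
     (\<forall>x\<in>l2. \<forall>c. T (\<lambda>k. c * x k) = (\<lambda>k. c * T x k)) \<and>
     (\<exists>C. \<forall>x\<in>l2. l2norm (T x) \<le> C * l2norm x)"

definition diag :: "(nat \<Rightarrow> complex) \<Rightarrow> (nat \<Rightarrow> complex) \<Rightarrow> (nat \<Rightarrow> complex)" where
  "diag d x = (\<lambda>k. d k * x k)"

definition C0_semigroup :: "(real \<Rightarrow> (nat \<Rightarrow> complex) \<Rightarrow> (nat \<Rightarrow> complex)) \<Rightarrow> bool" where
  "C0_semigroup T \<longleftrightarrow>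
     (\<forall>t\<ge>0. bounded_op (T t)) \<and>
     (\<forall>x\<in>l2. T 0 x = x) \<and>
     (\<forall>s\<ge>0. \<forall>t\<ge>0. \<forall>x\<in>l2. T (s + t) x = T s (T t x)) \<and>
     (\<forall>x\<in>l2. ((\<lambda>t. l2norm (\<lambda>k. T t x k - x k)) \<longlongrightarrow> 0) (at_right 0))"

definition generates :: "((nat \<Rightarrow> complex) \<Rightarrow> (nat \<Rightarrow> complex)) \<Rightarrow> (nat \<Rightarrow> complex) set
    \<Rightarrow> (real \<Rightarrow> (nat \<Rightarrow> complex) \<Rightarrow> (nat \<Rightarrow> complex)) \<Rightarrow> bool" where
  "generates A D T \<longleftrightarrow> C0_semigroup T \<and> D \<subseteq> l2 \<and>
     (\<forall>x\<in>l2. x \<in> D \<longleftrightarrow> (\<exists>y\<in>l2.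
        ((\<lambda>h. l2norm (\<lambda>k. (T h x k - x k) / of_real h - y k)) \<longlongrightarrow> 0) (at_right 0))) \<and>
     (\<forall>x\<in>D. A x \<in> l2 \<and>
        ((\<lambda>h. l2norm (\<lambda>k. (T h x k - x k) / of_real h - A x k)) \<longlongrightarrow> 0) (at_right 0))"

text \<open>Here R is the (bounded, everywhere defined) inverse of I - A : D \<rightarrow> l2.\<close>
definition poly_stable :: "((nat \<Rightarrow> complex) \<Rightarrow> (nat \<Rightarrow> complex)) \<Rightarrow> (nat \<Rightarrow> complex) set
    \<Rightarrow> (real \<Rightarrow> (nat \<Rightarrow> complex) \<Rightarrow> (nat \<Rightarrow> complex)) \<Rightarrow> real \<Rightarrow> bool" where
  "poly_stable A D T \<beta> \<longleftrightarrow>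
     (\<exists>C. \<forall>t\<ge>0. opnorm (T t) \<le> C) \<and>
     (\<exists>R. bounded_op R \<and>
        (\<forall>x\<in>l2. R x \<in> D \<and> (\<lambda>k. R x k - A (R x) k) = x) \<and>
        (\<forall>x\<in>D. R (\<lambda>k. x k - A x k) = x) \<and>
        (\<exists>M t0. M > 0 \<and> t0 > 0 \<and>
           (\<forall>t\<ge>t0. opnorm (\<lambda>x. T t (R x)) \<le> M * t powr (-1 / \<beta>))))"

text \<open>The eigenvalues lambda_k = -1/k + i k, k = 1,2,..., indexed by k :: nat as k+1.\<close>
definition lam :: "nat \<Rightarrow> complex" where
  "lam k = - 1 / of_nat (Suc k) + \<i> * of_nat (Suc k)"

definition domA :: "(nat \<Rightarrow> complex) set" where
  "domA = {x\<in>l2. diag lam x \<in> l2}"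

end

theory Submission
  imports Defs
begin


lemma diag_l2:
  assumes x: "x \<in> l2" and d: "\<And>k. cmod (d k) \<le> C"
  shows "diag d x \<in> l2" "l2norm (diag d x) \<le> C * l2norm x"
proof -
  have C0: "C \<ge> 0" using d[of 0] norm_ge_zero order_trans by blast
  have s: "summable (\<lambda>k. (cmod (x k))\<^sup>2)" using x by (simp add: l2_def)
  have le: "(cmod (diag d x k))\<^sup>2 \<le> C\<^sup>2 * (cmod (x k))\<^sup>2" for k
  proof -
    have "(cmod (diag d x k))\<^sup>2 = (cmod (d k))\<^sup>2 * (cmod (x k))\<^sup>2"
      by (simp add: diag_def norm_mult power_mult_distrib)
    also have "\<dots> \<le> C\<^sup>2 * (cmod (x k))\<^sup>2"
      by (intro mult_right_mono power_mono d) auto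
    finally show ?thesis .
  qed
  have s2: "summable (\<lambda>k. C\<^sup>2 * (cmod (x k))\<^sup>2)" using s by (rule summable_mult)
  have s3: "summable (\<lambda>k. (cmod (diag d x k))\<^sup>2)"
    by (rule summable_comparison_test'[OF s2]) (use le in auto)
  then show "diag d x \<in> l2" by (simp add: l2_def)
  have "(\<Sum>k. (cmod (diag d x k))\<^sup>2) \<le> (\<Sum>k. C\<^sup>2 * (cmod (x k))\<^sup>2)"
    by (rule suminf_le[OF le s3 s2])
  also have "\<dots> = C\<^sup>2 * (\<Sum>k. (cmod (x k))\<^sup>2)" using suminf_mult[OF s] by simp
  finally have "sqrt (\<Sum>k. (cmod (diag d x k))\<^sup>2) \<le> sqrt (C\<^sup>2 * (\<Sum>k. (cmod (x k))\<^sup>2))"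
    by (rule real_sqrt_le_mono)
  also have "\<dots> = C * l2norm x" using C0 by (simp add: l2norm_def real_sqrt_mult)
  finally show "l2norm (diag d x) \<le> C * l2norm x" by (simp add: l2norm_def)
qed


lemma l2_zero: "(\<lambda>k. 0) \<in> l2" by (simp add: l2_def)
lemma l2norm_zero: "l2norm (\<lambda>k. 0) = 0" by (simp add: l2norm_def)

lemma diag_bounded_op:
  assumes d: "\<And>k. cmod (d k) \<le> C"
  shows "bounded_op (diag d)"
  unfolding bounded_op_def
proof (intro conjI)
  show "\<exists>C. \<forall>x\<in>l2. l2norm (diag d x) \<le> C * l2norm x" using diag_l2(2)[where d=d and C=C, OF _ d] by blast
qed (use diag_l2(1)[where d=d and C=C, OF _ d] in \<open>auto simp: diag_def algebra_simps\<close>)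

lemma opnorm_diag_le:
  assumes d: "\<And>k. cmod (d k) \<le> C"
  shows "opnorm (diag d) \<le> C"
proof -
  have C0: "C \<ge> 0" using d[of 0] norm_ge_zero order_trans by blast
  show ?thesis unfolding opnorm_def
  proof (rule cSUP_least)
    show "{x \<in> l2. l2norm x \<le> 1} \<noteq> {}" using l2_zero l2norm_zero by force
    fix x assume "x \<in> {x \<in> l2. l2norm x \<le> 1}"
    hence "x \<in> l2" "l2norm x \<le> 1" by auto
    hence "l2norm (diag d x) \<le> C * l2norm x" using diag_l2[OF _ d] by auto
    also have "\<dots> \<le> C * 1" using \<open>l2norm x \<le> 1\<close> C0 by (intro mult_left_mono) auto
    finally show "l2norm (diag d x) \<le> C" by simp
  qed
qed

lemma opnorm_diag_ge:
  assumes d: "\<And>k. cmod (d k) \<le> C"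
  shows "cmod (d j) \<le> opnorm (diag d)"
proof -
  define e where "e = (\<lambda>k. if k = j then (1::complex) else 0)"
  have se: "(\<lambda>k. (cmod (e k))\<^sup>2) sums 1"
  proof -
    have "(\<lambda>k. (cmod (e k))\<^sup>2) = (\<lambda>r. if r = j then 1 else 0)" by (auto simp: e_def)
    thus ?thesis using sums_single[of j "\<lambda>_. 1::real"] by simp
  qed
  hence e: "e \<in> l2" "l2norm e = 1" by (auto simp: l2_def l2norm_def sums_iff)
  have sde: "(\<lambda>k. (cmod (diag d e k))\<^sup>2) sums (cmod (d j))\<^sup>2"
  proof -
    have "(\<lambda>k. (cmod (diag d e k))\<^sup>2) = (\<lambda>r. if r = j then (cmod (d j))\<^sup>2 else 0)" by (auto simp: e_def diag_def)
    thus ?thesis using sums_single[of j "\<lambda>_. (cmod (d j))\<^sup>2"] by simp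
  qed
  hence "l2norm (diag d e) = cmod (d j)" by (simp add: l2norm_def sums_iff)
  moreover have "l2norm (diag d e) \<le> opnorm (diag d)" unfolding opnorm_def
  proof (rule cSUP_upper)
    show "e \<in> {x \<in> l2. l2norm x \<le> 1}" using e by auto
    show "bdd_above ((\<lambda>x. l2norm (diag d x)) ` {x \<in> l2. l2norm x \<le> 1})"
    proof (rule bdd_aboveI2)
      fix x assume "x \<in> {x \<in> l2. l2norm x \<le> 1}"
      hence "x \<in> l2" "l2norm x \<le> 1" by auto
      have C0: "C \<ge> 0" using d[of 0] norm_ge_zero order_trans by blast
      have "l2norm (diag d x) \<le> C * l2norm x" using diag_l2[OF \<open>x\<in>l2\<close> d] by auto
      also have "\<dots> \<le> C * 1" using \<open>l2norm x \<le> 1\<close> C0 by (intro mult_left_mono) auto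
      finally show "l2norm (diag d x) \<le> C" by simp
    qed
  qed
  ultimately show ?thesis by simp
qed

lemma dom_series:
  fixes f :: "'a \<Rightarrow> nat \<Rightarrow> real"
  assumes lim: "\<And>k. ((\<lambda>t. f t k) \<longlongrightarrow> 0) F"
    and bnd: "eventually (\<lambda>t. \<forall>k. 0 \<le> f t k \<and> f t k \<le> g k) F"
    and g: "summable g"
  shows "((\<lambda>t. \<Sum>k. f t k) \<longlongrightarrow> 0) F"
proof (rule tendstoI)
  fix e :: real assume e: "e > 0"
  obtain N where N: "\<And>n. n \<ge> N \<Longrightarrow> norm (\<Sum>i. g (i + n)) < e/2"
    using suminf_exist_split[OF _ g, of "e/2"] e by auto
  have "((\<lambda>t. \<Sum>k<N. f t k) \<longlongrightarrow> 0) F" by (intro tendsto_null_sum lim)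
  hence ev: "eventually (\<lambda>t. dist (\<Sum>k<N. f t k) 0 < e/2) F" using e by (intro tendstoD) auto
  show "eventually (\<lambda>t. dist (\<Sum>k. f t k) 0 < e) F"
    using ev bnd
  proof eventually_elim
    case (elim t)
    have ft: "summable (f t)"
      by (rule summable_comparison_test'[OF g]) (use elim in auto)
    have ft': "summable (\<lambda>i. f t (i + N))" using ft by (simp add: summable_iff_shift)
    have g': "summable (\<lambda>i. g (i + N))" using g by (simp add: summable_iff_shift)
    have eq: "(\<Sum>k. f t k) = (\<Sum>i. f t (i + N)) + (\<Sum>i<N. f t i)"
      by (rule suminf_split_initial_segment[OF ft])
    have "(\<Sum>i. f t (i + N)) \<le> (\<Sum>i. g (i + N))"
      by (rule suminf_le[OF _ ft' g']) (use elim in auto)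
    moreover have "(\<Sum>i. g (i + N)) < e/2" using N[of N] by simp
    moreover have "0 \<le> (\<Sum>i. f t (i + N))" by (rule suminf_nonneg[OF ft']) (use elim in auto)
    moreover have "0 \<le> (\<Sum>i<N. f t i)" by (rule sum_nonneg) (use elim in auto)
    moreover have "(\<Sum>i<N. f t i) < e/2" using elim by simp
    ultimately show ?case using eq by simp
  qed
qed



lemma Re_lam: "Re (lam k) = - 1 / real (Suc k)" and Im_lam: "Im (lam k) = real (Suc k)"
  by (simp_all add: lam_def)

lemma Re_lam_le: "Re (lam k) \<le> 0" by (simp add: Re_lam)

lemma norm_exp_lam: "t \<ge> 0 \<Longrightarrow> cmod (exp (of_real t * lam k)) \<le> 1"
  using Re_lam_le[of k] by (simp add: mult_nonneg_nonpos)

lemma norm_1_lam: "cmod (1 - lam k) \<ge> real (Suc k)"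
proof -
  have "Im (1 - lam k) = - real (Suc k)" by (simp add: Im_lam)
  thus ?thesis using abs_Im_le_cmod[of "1 - lam k"] by simp
qed

lemma norm_lam: "cmod (lam k) \<ge> real (Suc k)"
proof -
  have "Im (lam k) = real (Suc k)" by (simp add: Im_lam)
  thus ?thesis using abs_Im_le_cmod[of "lam k"] by simp
qed

lemma exp_sub_one_le:
  assumes "Re w \<le> 0" shows "cmod (exp w - 1) \<le> cmod w"
proof -
  have "cmod (exp w - exp 0) \<le> 1 * cmod (w - 0)"
  proof (rule field_differentiable_bound[OF convex_halfspace_Re_le[of 0]])
    fix z :: complex assume "z \<in> {x. Re x \<le> 0}"
    thus "cmod (exp z) \<le> 1" by simp
  next
    fix z :: complex show "(exp has_field_derivative exp z) (at z within {x. Re x \<le> 0})"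
      by (rule has_field_derivative_at_within[OF DERIV_exp])
  qed (use assms in auto)
  thus ?thesis by simp
qed

lemma exp_deriv_lim:
  fixes c :: complex
  shows "((\<lambda>h::real. (exp (of_real h * c) - 1) / of_real h) \<longlongrightarrow> c) (at_right 0)"
proof -
  have d: "((\<lambda>z. exp (z * c)) has_field_derivative exp (0 * c) * c) (at 0)"
    by (auto intro!: derivative_eq_intros)
  hence l: "((\<lambda>z. (exp (z * c) - 1) / z) \<longlongrightarrow> c) (at 0)" by (simp add: has_field_derivative_iff)
  have f: "filterlim (\<lambda>h::real. complex_of_real h) (at 0) (at_right 0)"
    unfolding filterlim_at
  proof
    show "\<forall>\<^sub>F x in at_right 0. complex_of_real x \<in> UNIV \<and> complex_of_real x \<noteq> 0"
      using eventually_at_right_less[of "0::real"] by (auto elim!: eventually_mono)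
    have "((\<lambda>h::real. complex_of_real h) \<longlongrightarrow> complex_of_real 0) (at_right 0)"
      by (intro tendsto_intros)
    thus "((\<lambda>h::real. complex_of_real h) \<longlongrightarrow> 0) (at_right 0)" by simp
  qed
  show ?thesis using filterlim_compose[OF l f] by simp
qed


lemma lam_ne1: "1 - lam k \<noteq> 0"
proof
  assume "1 - lam k = 0"
  hence "cmod (1 - lam k) = 0" by (simp only: norm_zero)
  with norm_1_lam[of k] show False by linarith
qed
lemma lam_ne0: "lam k \<noteq> 0"
proof
  assume "lam k = 0"
  hence "cmod (lam k) = 0" by (simp only: norm_zero)
  with norm_lam[of k] show False by linarith
qed
lemma cmod_lam_sq: "(cmod (lam k))\<^sup>2 = (real (Suc k))\<^sup>2 + 1 / (real (Suc k))\<^sup>2"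
  by (simp add: cmod_power2 Re_lam Im_lam power_divide)



definition TT :: "real \<Rightarrow> (nat \<Rightarrow> complex) \<Rightarrow> (nat \<Rightarrow> complex)" where
  "TT t = diag (\<lambda>k. exp (of_real t * lam k))"

lemma l2_diff:
  assumes "x \<in> l2" "y \<in> l2" shows "(\<lambda>k. x k - y k) \<in> l2"
proof -
  have sx: "summable (\<lambda>k. (cmod (x k))\<^sup>2)" and sy: "summable (\<lambda>k. (cmod (y k))\<^sup>2)"
    using assms by (auto simp: l2_def)
  have le: "(cmod (x k - y k))\<^sup>2 \<le> 2 * (cmod (x k))\<^sup>2 + 2 * (cmod (y k))\<^sup>2" for k
  proof -
    have "cmod (x k - y k) \<le> cmod (x k) + cmod (y k)" by (rule norm_triangle_ineq4)
    hence "(cmod (x k - y k))\<^sup>2 \<le> (cmod (x k) + cmod (y k))\<^sup>2" by (intro power_mono) auto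
    also have "\<dots> \<le> 2 * (cmod (x k))\<^sup>2 + 2 * (cmod (y k))\<^sup>2"
    proof -
      have "0 \<le> (cmod (x k) - cmod (y k))\<^sup>2" by simp
      thus ?thesis by (simp add: power2_eq_square algebra_simps)
    qed
    finally show ?thesis .
  qed
  have "summable (\<lambda>k. 2 * (cmod (x k))\<^sup>2 + 2 * (cmod (y k))\<^sup>2)"
    by (intro summable_add summable_mult sx sy)
  hence "summable (\<lambda>k. (cmod (x k - y k))\<^sup>2)"
    by (rule summable_comparison_test') (use le in auto)
  thus ?thesis by (simp add: l2_def)
qed

lemma component_le:
  assumes "q \<in> l2" shows "cmod (q k) \<le> l2norm q"
proof -
  have s: "summable (\<lambda>k. (cmod (q k))\<^sup>2)" using assms by (simp add: l2_def)
  have "(\<Sum>j\<in>{k}. (cmod (q j))\<^sup>2) \<le> (\<Sum>j. (cmod (q j))\<^sup>2)"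
    by (rule sum_le_suminf[OF s]) auto
  hence "sqrt ((cmod (q k))\<^sup>2) \<le> sqrt (\<Sum>j. (cmod (q j))\<^sup>2)" by (intro real_sqrt_le_mono) simp
  hence "sqrt ((cmod (q k))\<^sup>2) \<le> l2norm q" unfolding l2norm_def .
  thus ?thesis by simp
qed

lemma l2norm_tendsto0:
  assumes lim: "\<And>k. ((\<lambda>t. q t k) \<longlongrightarrow> 0) F"
    and bnd: "eventually (\<lambda>t. \<forall>k. (cmod (q t k))\<^sup>2 \<le> g k) F"
    and g: "summable g"
  shows "((\<lambda>t. l2norm (q t)) \<longlongrightarrow> 0) F"
proof -
  have "((\<lambda>t. \<Sum>k. (cmod (q t k))\<^sup>2) \<longlongrightarrow> 0) F"
  proof (rule dom_series[OF _ _ g])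
    fix k
    have "((\<lambda>t. (cmod (q t k))\<^sup>2) \<longlongrightarrow> (cmod 0)\<^sup>2) F" by (intro tendsto_intros lim)
    thus "((\<lambda>t. (cmod (q t k))\<^sup>2) \<longlongrightarrow> 0) F" by simp
  qed (use bnd in \<open>auto elim!: eventually_mono\<close>)
  hence "((\<lambda>t. sqrt (\<Sum>k. (cmod (q t k))\<^sup>2)) \<longlongrightarrow> sqrt 0) F" by (intro tendsto_intros)
  thus ?thesis by (simp add: l2norm_def)
qed

lemma ev_pos: "eventually (\<lambda>h::real. h > 0) (at_right 0)"
  using eventually_at_right_less[of "0::real"] by simp

lemma TT_C0: "C0_semigroup TT"
  unfolding C0_semigroup_def
proof (intro conjI allI impI ballI)
  fix t :: real assume "t \<ge> 0"
  show "bounded_op (TT t)" unfolding TT_def by (intro diag_bounded_op[where C=1] norm_exp_lam[OF \<open>0 \<le> t\<close>])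
next
  fix x show "TT 0 x = x" by (simp add: TT_def diag_def)
next
  fix s t :: real and x
  show "TT (s + t) x = TT s (TT t x)"
    by (simp add: TT_def diag_def distrib_right exp_add mult.assoc)
next
  fix x assume x: "x \<in> l2"
  show "((\<lambda>t. l2norm (\<lambda>k. TT t x k - x k)) \<longlongrightarrow> 0) (at_right 0)"
  proof (rule l2norm_tendsto0)
    fix k
    have "((\<lambda>t::real. exp (of_real t * lam k) * x k - x k) \<longlongrightarrow> exp (of_real 0 * lam k) * x k - x k) (at_right 0)"
      by (intro tendsto_intros)
    thus "((\<lambda>t. TT t x k - x k) \<longlongrightarrow> 0) (at_right 0)" by (simp add: TT_def diag_def)
  next
    show "summable (\<lambda>k. 4 * (cmod (x k))\<^sup>2)" using x by (intro summable_mult) (simp add: l2_def)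
    show "\<forall>\<^sub>F t in at_right 0. \<forall>k. (cmod (TT t x k - x k))\<^sup>2 \<le> 4 * (cmod (x k))\<^sup>2"
      using ev_pos
    proof eventually_elim
      case (elim t)
      show ?case
      proof
        fix k
        have "cmod (exp (of_real t * lam k) - 1) \<le> cmod (exp (of_real t * lam k)) + 1"
          by (metis norm_one norm_triangle_ineq4)
        also have "\<dots> \<le> 2" using norm_exp_lam[of t k] elim by simp
        finally have "cmod (exp (of_real t * lam k) - 1) * cmod (x k) \<le> 2 * cmod (x k)"
          by (intro mult_right_mono) auto
        moreover have "TT t x k - x k = (exp (of_real t * lam k) - 1) * x k"
          by (simp add: TT_def diag_def algebra_simps)
        ultimately have "cmod (TT t x k - x k) \<le> 2 * cmod (x k)" by (simp add: norm_mult)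
        hence "(cmod (TT t x k - x k))\<^sup>2 \<le> (2 * cmod (x k))\<^sup>2" by (intro power_mono) auto
        thus "(cmod (TT t x k - x k))\<^sup>2 \<le> 4 * (cmod (x k))\<^sup>2" by (simp add: power_mult_distrib)
      qed
    qed
  qed
qed



lemma quot_eq: "(TT h x k - x k) / of_real h = (exp (of_real h * lam k) - 1) / of_real h * x k"
  by (simp add: TT_def diag_def algebra_simps)

lemma deriv_tendsto:
  "((\<lambda>h. (TT h x k - x k) / of_real h) \<longlongrightarrow> lam k * x k) (at_right 0)"
  unfolding quot_eq by (intro tendsto_intros exp_deriv_lim)

lemma gen_lim:
  assumes x: "x \<in> domA"
  shows "((\<lambda>h. l2norm (\<lambda>k. (TT h x k - x k) / of_real h - diag lam x k)) \<longlongrightarrow> 0) (at_right 0)"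
proof (rule l2norm_tendsto0)
  fix k
  have "((\<lambda>h. (TT h x k - x k) / of_real h - diag lam x k) \<longlongrightarrow> lam k * x k - diag lam x k) (at_right 0)"
    by (intro tendsto_intros deriv_tendsto)
  thus "((\<lambda>h. (TT h x k - x k) / of_real h - diag lam x k) \<longlongrightarrow> 0) (at_right 0)"
    by (simp add: diag_def)
next
  have "diag lam x \<in> l2" using x by (simp add: domA_def)
  thus "summable (\<lambda>k. 4 * (cmod (diag lam x k))\<^sup>2)" by (intro summable_mult) (simp add: l2_def)
  show "\<forall>\<^sub>F h in at_right 0. \<forall>k. (cmod ((TT h x k - x k) / of_real h - diag lam x k))\<^sup>2
           \<le> 4 * (cmod (diag lam x k))\<^sup>2"
    using ev_pos
  proof eventually_elim
    case (elim h)
    show ?case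
    proof
      fix k
      have "cmod (exp (of_real h * lam k) - 1) \<le> cmod (of_real h * lam k)"
        by (rule exp_sub_one_le) (use elim Re_lam_le[of k] in \<open>simp add: mult_nonneg_nonpos\<close>)
      also have "\<dots> = h * cmod (lam k)" using elim by (simp add: norm_mult)
      finally have a: "cmod ((exp (of_real h * lam k) - 1) / of_real h) \<le> cmod (lam k)"
        using elim by (simp add: norm_divide divide_le_eq mult.commute)
      have "cmod ((exp (of_real h * lam k) - 1) / of_real h - lam k)
            \<le> cmod ((exp (of_real h * lam k) - 1) / of_real h) + cmod (lam k)"
        by (rule norm_triangle_ineq4)
      also have "\<dots> \<le> 2 * cmod (lam k)" using a by simp
      finally have b: "cmod ((exp (of_real h * lam k) - 1) / of_real h - lam k) * cmod (x k)
           \<le> 2 * cmod (lam k) * cmod (x k)" by (intro mult_right_mono) auto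
      have "(TT h x k - x k) / of_real h - diag lam x k
          = ((exp (of_real h * lam k) - 1) / of_real h - lam k) * x k"
        unfolding quot_eq by (simp add: diag_def algebra_simps)
      hence "cmod ((TT h x k - x k) / of_real h - diag lam x k) \<le> 2 * cmod (diag lam x k)"
        using b by (simp add: norm_mult diag_def mult.assoc)
      hence "(cmod ((TT h x k - x k) / of_real h - diag lam x k))\<^sup>2 \<le> (2 * cmod (diag lam x k))\<^sup>2"
        by (intro power_mono) auto
      thus "(cmod ((TT h x k - x k) / of_real h - diag lam x k))\<^sup>2 \<le> 4 * (cmod (diag lam x k))\<^sup>2"
        by (simp add: power_mult_distrib)
    qed
  qed
qed

lemma gen_conv:
  assumes x: "x \<in> l2" and y: "y \<in> l2"
    and lim: "((\<lambda>h. l2norm (\<lambda>k. (TT h x k - x k) / of_real h - y k)) \<longlongrightarrow> 0) (at_right 0)"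
  shows "x \<in> domA"
proof -
  have "y k = lam k * x k" for k
  proof -
    have ev: "\<forall>\<^sub>F h in at_right 0. cmod ((TT h x k - x k) / of_real h - y k)
               \<le> l2norm (\<lambda>k. (TT h x k - x k) / of_real h - y k)"
      using ev_pos
    proof eventually_elim
      case (elim h)
      have "diag (\<lambda>k. (exp (of_real h * lam k) - 1) / of_real h) x \<in> l2"
      proof (rule diag_l2(1)[OF x])
        fix k
        have "cmod (exp (of_real h * lam k) - 1) \<le> cmod (exp (of_real h * lam k)) + 1"
          by (metis norm_one norm_triangle_ineq4)
        also have "\<dots> \<le> 2" using norm_exp_lam[of h k] elim by simp
        finally show "cmod ((exp (of_real h * lam k) - 1) / of_real h) \<le> 2 / h"
          using elim by (simp add: norm_divide divide_right_mono)
      qed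
      hence "(\<lambda>k. diag (\<lambda>k. (exp (of_real h * lam k) - 1) / of_real h) x k - y k) \<in> l2"
        using y by (rule l2_diff)
      hence "(\<lambda>k. (TT h x k - x k) / of_real h - y k) \<in> l2"
        by (simp add: quot_eq diag_def)
      thus ?case by (rule component_le)
    qed
    have "((\<lambda>h. cmod ((TT h x k - x k) / of_real h - y k)) \<longlongrightarrow> 0) (at_right 0)"
      by (rule tendsto_sandwich[OF _ ev tendsto_const lim]) auto
    hence l1: "((\<lambda>h. (TT h x k - x k) / of_real h - y k) \<longlongrightarrow> 0) (at_right 0)"
      by (simp add: tendsto_norm_zero_iff)
    have l2: "((\<lambda>h. (TT h x k - x k) / of_real h - y k) \<longlongrightarrow> lam k * x k - y k) (at_right 0)"
      by (intro tendsto_intros deriv_tendsto)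
    have "lam k * x k - y k = 0"
      using tendsto_unique[OF trivial_limit_at_right_real l2 l1] .
    thus ?thesis by simp
  qed
  hence "diag lam x = y" by (auto simp: diag_def)
  thus ?thesis using x y by (simp add: domA_def)
qed

lemma generates_TT: "generates (diag lam) domA TT"
  unfolding generates_def
proof (intro conjI TT_C0 ballI)
  show "domA \<subseteq> l2" by (auto simp: domA_def)
next
  fix x assume "x \<in> l2"
  show "x \<in> domA \<longleftrightarrow> (\<exists>y\<in>l2. ((\<lambda>h. l2norm (\<lambda>k. (TT h x k - x k) / of_real h - y k)) \<longlongrightarrow> 0) (at_right 0))"
  proof
    assume "x \<in> domA"
    thus "\<exists>y\<in>l2. ((\<lambda>h. l2norm (\<lambda>k. (TT h x k - x k) / of_real h - y k)) \<longlongrightarrow> 0) (at_right 0)"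
      using gen_lim by (auto simp: domA_def)
  qed (use gen_conv \<open>x \<in> l2\<close> in blast)
next
  fix x assume "x \<in> domA"
  thus "diag lam x \<in> l2" by (simp add: domA_def)
  show "((\<lambda>h. l2norm (\<lambda>k. (TT h x k - x k) / of_real h - diag lam x k)) \<longlongrightarrow> 0) (at_right 0)"
    using gen_lim \<open>x \<in> domA\<close> .
qed




lemma poly_stable_TT: "poly_stable (diag lam) domA TT 1"
  unfolding poly_stable_def
proof (intro conjI exI[of _ "diag (\<lambda>k. 1 / (1 - lam k))"])
  show "\<exists>C. \<forall>t\<ge>0. opnorm (TT t) \<le> C"
    by (rule exI[of _ 1]) (auto simp: TT_def intro!: opnorm_diag_le norm_exp_lam)
  have b1: "cmod (1 / (1 - lam k)) \<le> 1" for k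
    using norm_1_lam[of k] by (simp add: norm_divide divide_le_eq)
  show "bounded_op (diag (\<lambda>k. 1 / (1 - lam k)))" by (rule diag_bounded_op[where C=1]) (rule b1)
  show "\<forall>x\<in>l2. diag (\<lambda>k. 1 / (1 - lam k)) x \<in> domA \<and>
      (\<lambda>k. diag (\<lambda>k. 1 / (1 - lam k)) x k - diag lam (diag (\<lambda>k. 1 / (1 - lam k)) x) k) = x"
  proof
    fix x assume x: "x \<in> l2"
    have "diag (\<lambda>k. 1 / (1 - lam k)) x \<in> l2" by (rule diag_l2(1)[OF x b1])
    moreover have "diag (\<lambda>k. lam k / (1 - lam k)) x \<in> l2"
    proof (rule diag_l2(1)[OF x])
      fix k
      have "cmod (lam k) \<le> cmod (1 - lam k) + 1"
        using norm_triangle_ineq4[of 1 "1 - lam k"] by simp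
      also have "\<dots> \<le> 2 * cmod (1 - lam k)" using norm_1_lam[of k] by simp
      finally show "cmod (lam k / (1 - lam k)) \<le> 2"
        using lam_ne1[of k] by (simp add: norm_divide divide_le_eq)
    qed
    moreover have "diag lam (diag (\<lambda>k. 1 / (1 - lam k)) x) = diag (\<lambda>k. lam k / (1 - lam k)) x"
      by (simp add: diag_def)
    moreover have "(\<lambda>k. diag (\<lambda>k. 1 / (1 - lam k)) x k - diag lam (diag (\<lambda>k. 1 / (1 - lam k)) x) k) = x"
    proof
      fix k
      have g: "d * x k - lam k * (d * x k) = ((1 - lam k) * d) * x k" for d by (simp add: algebra_simps)
      have "(1 - lam k) * (1 / (1 - lam k)) = 1" using lam_ne1[of k] by simp
      thus "diag (\<lambda>k. 1 / (1 - lam k)) x k - diag lam (diag (\<lambda>k. 1 / (1 - lam k)) x) k = x k"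
        unfolding diag_def g by simp
    qed
    ultimately show "diag (\<lambda>k. 1 / (1 - lam k)) x \<in> domA \<and>
      (\<lambda>k. diag (\<lambda>k. 1 / (1 - lam k)) x k - diag lam (diag (\<lambda>k. 1 / (1 - lam k)) x) k) = x"
      by (simp add: domA_def)
  qed
  show "\<forall>x\<in>domA. diag (\<lambda>k. 1 / (1 - lam k)) (\<lambda>k. x k - diag lam x k) = x"
  proof
    fix x show "diag (\<lambda>k. 1 / (1 - lam k)) (\<lambda>k. x k - diag lam x k) = x"
    proof
      fix k show "diag (\<lambda>k. 1 / (1 - lam k)) (\<lambda>k. x k - diag lam x k) k = x k"
        using lam_ne1[of k] by (simp add: diag_def field_simps)
    qed
  qed
  show "\<exists>M t0. M > 0 \<and> t0 > 0 \<and>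
      (\<forall>t\<ge>t0. opnorm (\<lambda>x. TT t (diag (\<lambda>k. 1 / (1 - lam k)) x)) \<le> M * t powr (-1 / 1))"
  proof (intro exI[of _ 1] conjI allI impI)
    fix t :: real assume t: "t \<ge> 1"
    have eq: "(\<lambda>x. TT t (diag (\<lambda>k. 1 / (1 - lam k)) x)) = diag (\<lambda>k. exp (of_real t * lam k) / (1 - lam k))"
      by (auto simp: TT_def diag_def fun_eq_iff)
    have "opnorm (diag (\<lambda>k. exp (of_real t * lam k) / (1 - lam k))) \<le> 1 / t"
    proof (rule opnorm_diag_le)
      fix k
      define n where "n = real (Suc k)"
      have n: "n \<ge> 1" by (simp add: n_def)
      have ne: "cmod (exp (of_real t * lam k)) = exp (- t / n)"
        by (simp add: Re_lam n_def)
      have "t / n \<le> exp (t / n)" using exp_ge_add_one_self[of "t/n"] by linarith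
      hence "t * exp (- t / n) \<le> n"
        using n by (simp add: exp_minus field_simps)
      hence "exp (- t / n) / n \<le> 1 / t" using n t by (simp add: field_simps)
      moreover have "cmod (exp (of_real t * lam k) / (1 - lam k)) \<le> exp (- t / n) / n"
        unfolding norm_divide ne using norm_1_lam[of k] n
        by (intro divide_left_mono) (use lam_ne1[of k] in \<open>auto simp: n_def\<close>)
      ultimately show "cmod (exp (of_real t * lam k) / (1 - lam k)) \<le> 1 / t" by linarith
    qed
    thus "opnorm (\<lambda>x. TT t (diag (\<lambda>k. 1 / (1 - lam k)) x)) \<le> 1 * t powr (-1 / 1)"
      using t by (simp add: eq powr_minus_divide)
  qed auto
qed



definition dd :: "real \<Rightarrow> real \<Rightarrow> nat \<Rightarrow> complex" where
  "dd \<alpha> t k = exp (of_real t / lam k) * (- lam k) powr (- of_real \<alpha>)"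



lemma norm_dd: "cmod (dd \<alpha> t k) = exp (t * Re (lam k) / (cmod (lam k))\<^sup>2) * cmod (lam k) powr (- \<alpha>)"
proof -
  have "cmod ((- lam k) powr (- of_real \<alpha>)) = cmod (- lam k) powr Re (- of_real \<alpha>)"
    by (rule norm_powr_real_powr') simp
  thus ?thesis by (simp add: dd_def norm_mult Re_divide')
qed

lemma dd_le1:
  assumes "t \<ge> 0" "\<alpha> > 0" shows "cmod (dd \<alpha> t k) \<le> 1"
proof -
  have "exp (t * Re (lam k) / (cmod (lam k))\<^sup>2) \<le> 1"
    using assms Re_lam_le[of k] by (simp add: mult_nonneg_nonpos divide_nonpos_nonneg)
  moreover have "cmod (lam k) powr (- \<alpha>) \<le> 1 powr (- \<alpha>)"
    using norm_lam[of k] assms by (intro powr_mono2') auto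
  ultimately have "exp (t * Re (lam k) / (cmod (lam k))\<^sup>2) * cmod (lam k) powr (- \<alpha>) \<le> 1 * 1"
    by (intro mult_mono) auto
  thus ?thesis by (simp add: norm_dd)
qed

lemma dd_lower:
  assumes t: "t \<ge> 0" and a: "\<alpha> > 0"
  shows "exp (- t / (real (Suc k))^3) * (2 powr (- \<alpha> / 2) * real (Suc k) powr (- \<alpha>)) \<le> cmod (dd \<alpha> t k)"
proof -
  define n where "n = real (Suc k)"
  have n: "n \<ge> 1" by (simp add: n_def)
  define D where "D = n\<^sup>2 + 1 / n\<^sup>2"
  have sq: "(cmod (lam k))\<^sup>2 = D" unfolding D_def n_def by (rule cmod_lam_sq)
  have n2: "n\<^sup>2 \<ge> 1" using n by (simp add: one_le_power)
  have iD: "1 / n\<^sup>2 \<le> 1" using n2 by (simp add: divide_le_eq)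
  have iD0: "1 / n\<^sup>2 \<ge> 0" by simp
  have D1: "n\<^sup>2 \<le> D" unfolding D_def using iD0 by linarith
  have D2: "D \<le> 2 * n\<^sup>2" unfolding D_def using iD n2 by linarith
  have Dpos: "D > 0" using D1 n2 by linarith
  have n3: "n^3 = n * n\<^sup>2" by (simp add: power3_eq_cube power2_eq_square)
  have n3pos: "n^3 > 0" using n by simp
  have "n^3 \<le> n * D" unfolding n3 using D1 n by (intro mult_left_mono) auto
  hence "t / (n * D) \<le> t / n^3" using t n3pos Dpos n by (intro divide_left_mono) (auto intro!: mult_pos_pos)
  moreover have "t * Re (lam k) / (cmod (lam k))\<^sup>2 = - (t / (n * D))"
    unfolding sq Re_lam n_def[symmetric] by simp
  ultimately have "- t / n^3 \<le> t * Re (lam k) / (cmod (lam k))\<^sup>2" by simp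
  hence e: "exp (- t / n^3) \<le> exp (t * Re (lam k) / (cmod (lam k))\<^sup>2)" by simp
  have s2: "(sqrt 2 * n)\<^sup>2 = 2 * n\<^sup>2" by (simp add: power_mult_distrib)
  have "(cmod (lam k))\<^sup>2 \<le> (sqrt 2 * n)\<^sup>2" using sq D2 s2 by linarith
  hence c: "cmod (lam k) \<le> sqrt 2 * n" by (rule power2_le_imp_le) (use n in simp)
  have nl: "cmod (lam k) > 0" using lam_ne0[of k] by simp
  have "(sqrt 2 * n) powr (- \<alpha>) \<le> cmod (lam k) powr (- \<alpha>)"
    using c a nl by (intro powr_mono2') auto
  moreover have "(sqrt 2 * n) powr (- \<alpha>) = 2 powr (- \<alpha> / 2) * n powr (- \<alpha>)"
  proof -
    have "(sqrt 2 * n) powr (- \<alpha>) = sqrt 2 powr (- \<alpha>) * n powr (- \<alpha>)"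
      by (rule powr_mult)
    moreover have "sqrt 2 = 2 powr (1/2)" by (rule powr_half_sqrt[symmetric]) simp
    hence "sqrt 2 powr (- \<alpha>) = 2 powr (- \<alpha> / 2)" by (simp only: powr_powr) simp
    ultimately show ?thesis by simp
  qed
  ultimately have p: "2 powr (- \<alpha> / 2) * n powr (- \<alpha>) \<le> cmod (lam k) powr (- \<alpha>)" by simp
  have "exp (- t / n^3) * (2 powr (- \<alpha> / 2) * n powr (- \<alpha>))
        \<le> exp (t * Re (lam k) / (cmod (lam k))\<^sup>2) * cmod (lam k) powr (- \<alpha>)"
    by (intro mult_mono e p) auto
  thus ?thesis unfolding norm_dd n_def .
qed



lemma lim_aux:
  fixes a :: real assumes a: "a > 0"
  shows "((\<lambda>t. t powr (a/3) * ((3*t/a) powr (1/3) + 1) powr (-a)) \<longlongrightarrow> (a/3) powr (a/3)) at_top"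
proof -
  define c where "c = (3/a) powr (1/3)"
  have c: "c > 0" using a by (simp add: c_def)
  have l1: "((\<lambda>t. c + t powr (-1/3)) \<longlongrightarrow> c + 0) at_top"
    by (intro tendsto_add tendsto_const tendsto_neg_powr filterlim_ident) auto
  have l2: "((\<lambda>t. (1 / (c + t powr (-1/3))) powr a) \<longlongrightarrow> (1 / (c + 0)) powr a) at_top"
    by (rule tendsto_powr[OF tendsto_divide[OF tendsto_const l1] tendsto_const]) (use c in auto)
  have val: "(1 / (c + 0)) powr a = (a/3) powr (a/3)"
    using a by (simp add: c_def powr_divide powr_powr)
  have ev: "\<forall>\<^sub>F t in at_top. (1 / (c + t powr (-1/3))) powr a = t powr (a/3) * ((3*t/a) powr (1/3) + 1) powr (-a)"
    using eventually_gt_at_top[of "0::real"]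
  proof eventually_elim
    case (elim t)
    have tp: "t powr (1/3) > 0" using elim by simp
    have s: "(3*t/a) powr (1/3) = c * t powr (1/3)"
    proof -
      have "3*t/a = (3/a)*t" by simp
      hence "(3*t/a) powr (1/3) = ((3/a)*t) powr (1/3)" by simp
      also have "\<dots> = (3/a) powr (1/3) * t powr (1/3)" by (rule powr_mult)
      finally show ?thesis by (simp only: c_def)
    qed
    have "c + t powr (-1/3) = (c * t powr (1/3) + 1) / t powr (1/3)"
      using tp by (simp add: powr_minus_divide field_simps)
    hence "c + t powr (-1/3) = ((3*t/a) powr (1/3) + 1) / t powr (1/3)"
      by (simp only: s)
    hence "(1 / (c + t powr (-1/3))) powr a = (t powr (1/3) / ((3*t/a) powr (1/3) + 1)) powr a"
      by simp
    also have "\<dots> = (t powr (1/3)) powr a / ((3*t/a) powr (1/3) + 1) powr a"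
      by (rule powr_divide)
    also have "\<dots> = t powr (a/3) * ((3*t/a) powr (1/3) + 1) powr (-a)"
      by (simp add: powr_powr powr_minus_divide)
    finally show ?case .
  qed
  show ?thesis using tendsto_cong[OF ev] l2 val by simp
qed

lemma target_eq:
  fixes \<alpha> :: real assumes a: "\<alpha> > 0"
  shows "1 / 2 powr (\<alpha> / 2) * (\<alpha> / (3 * exp 1)) powr (\<alpha> / 3)
       = 2 powr (-\<alpha>/2) * exp (-\<alpha>/3) * (\<alpha>/3) powr (\<alpha>/3)"
proof -
  have "(\<alpha> / (3 * exp 1)) powr (\<alpha> / 3) = (\<alpha>/3) powr (\<alpha>/3) / (exp 1) powr (\<alpha>/3)"
    using a by (simp add: powr_divide[symmetric])
  also have "(exp 1) powr (\<alpha>/3) = exp (\<alpha>/3)" by (simp add: exp_powr_real)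
  finally show ?thesis by (simp add: powr_minus_divide exp_minus field_simps)
qed



lemma pointwise_lower:
  fixes \<alpha> t :: real assumes a: "\<alpha> > 0" and t: "t \<ge> 1"
  shows "2 powr (-\<alpha>/2) * exp (-\<alpha>/3) * (t powr (\<alpha>/3) * ((3*t/\<alpha>) powr (1/3) + 1) powr (-\<alpha>))
         \<le> t powr (\<alpha>/3) * opnorm (diag (dd \<alpha> t))"
proof -
  define s where "s = (3*t/\<alpha>) powr (1/3)"
  have s0: "s > 0" using a t by (simp add: s_def)
  define k where "k = nat \<lceil>s\<rceil> - 1"
  define n where "n = real (Suc k)"
  have ceil: "\<lceil>s\<rceil> \<ge> 1" using s0 by simp
  have nceil: "n = of_int \<lceil>s\<rceil>" using ceil unfolding n_def k_def by (simp add: of_nat_diff)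
  have sn: "s \<le> n" unfolding nceil by simp
  have ns: "n \<le> s + 1" unfolding nceil by linarith
  have s3: "s ^ 3 = 3*t/\<alpha>"
  proof -
    have "s ^ 3 = s powr (real 3)" using s0 by (simp add: powr_realpow)
    also have "\<dots> = 3*t/\<alpha>" unfolding s_def using a t by (simp add: powr_powr)
    finally show ?thesis .
  qed
  have "3*t/\<alpha> \<le> n ^ 3" using sn s0 s3 by (metis power_mono less_imp_le)
  hence "t / n ^ 3 \<le> \<alpha> / 3" using a t sn s0
    by (simp add: divide_le_eq field_simps)
  hence e: "exp (-\<alpha>/3) \<le> exp (- t / n ^ 3)" by simp
  have p: "(s + 1) powr (-\<alpha>) \<le> n powr (-\<alpha>)" using a sn s0 ns by (intro powr_mono2') auto
  have "exp (-\<alpha>/3) * (2 powr (-\<alpha>/2) * (s + 1) powr (-\<alpha>)) \<le> exp (- t / n ^ 3) * (2 powr (-\<alpha>/2) * n powr (-\<alpha>))"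
    by (intro mult_mono e p mult_left_mono) auto
  also have "\<dots> \<le> cmod (dd \<alpha> t k)" unfolding n_def using dd_lower[of t \<alpha> k] a t by simp
  also have "\<dots> \<le> opnorm (diag (dd \<alpha> t))"
    by (rule opnorm_diag_ge[where C=1]) (rule dd_le1, use a t in auto)
  finally have "exp (-\<alpha>/3) * (2 powr (-\<alpha>/2) * (s + 1) powr (-\<alpha>)) \<le> opnorm (diag (dd \<alpha> t))" .
  hence "t powr (\<alpha>/3) * (exp (-\<alpha>/3) * (2 powr (-\<alpha>/2) * (s + 1) powr (-\<alpha>))) \<le> t powr (\<alpha>/3) * opnorm (diag (dd \<alpha> t))"
    by (intro mult_left_mono) auto
  thus ?thesis unfolding s_def by (simp add: algebra_simps)
qed

lemma liminf_part:
  fixes \<alpha> :: real assumes a: "\<alpha> > 0"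
  shows "Liminf at_top (\<lambda>t::real. ereal (t powr (\<alpha> / 3) *
          opnorm (diag (\<lambda>k. exp (of_real t / lam k) * (- lam k) powr (- of_real \<alpha>)))))
       \<ge> ereal (1 / 2 powr (\<alpha> / 2) * (\<alpha> / (3 * exp 1)) powr (\<alpha> / 3))"
proof -
  define G where "G = (\<lambda>t. 2 powr (-\<alpha>/2) * exp (-\<alpha>/3) * (t powr (\<alpha>/3) * ((3*t/\<alpha>) powr (1/3) + 1) powr (-\<alpha>)))"
  have "(G \<longlongrightarrow> 2 powr (-\<alpha>/2) * exp (-\<alpha>/3) * (\<alpha>/3) powr (\<alpha>/3)) at_top"
    unfolding G_def by (intro tendsto_mult tendsto_const lim_aux a)
  hence "((\<lambda>t. ereal (G t)) \<longlongrightarrow> ereal (1 / 2 powr (\<alpha> / 2) * (\<alpha> / (3 * exp 1)) powr (\<alpha> / 3))) at_top"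
    using target_eq[OF a] by (simp del: ereal_less_eq)
  hence "Liminf at_top (\<lambda>t. ereal (G t)) = ereal (1 / 2 powr (\<alpha> / 2) * (\<alpha> / (3 * exp 1)) powr (\<alpha> / 3))"
    by (intro lim_imp_Liminf) auto
  moreover have "Liminf at_top (\<lambda>t. ereal (G t)) \<le> Liminf at_top (\<lambda>t::real. ereal (t powr (\<alpha> / 3) *
          opnorm (diag (\<lambda>k. exp (of_real t / lam k) * (- lam k) powr (- of_real \<alpha>)))))"
  proof (rule Liminf_mono)
    show "\<forall>\<^sub>F t in at_top. ereal (G t) \<le> ereal (t powr (\<alpha> / 3) *
          opnorm (diag (\<lambda>k. exp (of_real t / lam k) * (- lam k) powr (- of_real \<alpha>))))"
      using eventually_ge_at_top[of "1::real"]
    proof eventually_elim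
      case (elim t)
      show ?case using pointwise_lower[OF a elim] unfolding G_def dd_def[abs_def] by simp
    qed
  qed
  ultimately show ?thesis by simp
qed


theorem mainTheorem5:
  shows "(\<exists>T. generates (diag lam) domA T \<and> poly_stable (diag lam) domA T 1) \<and>
    (\<forall>\<alpha>::real. \<alpha> > 0 \<longrightarrow>
       Liminf at_top (\<lambda>t::real. ereal (t powr (\<alpha> / 3) *
          opnorm (diag (\<lambda>k. exp (of_real t / lam k) * (- lam k) powr (- of_real \<alpha>)))))
       \<ge> ereal (1 / 2 powr (\<alpha> / 2) * (\<alpha> / (3 * exp 1)) powr (\<alpha> / 3)))"
  using generates_TT poly_stable_TT liminf_part by blast

end
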